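(* Let $A$ be a symmetric real $n\times n$ matrix, $w\in\mathbb{R}^n$ with all entries strictly positive, $W=\mathrm{diag}(w)$, and for nonzero $X\in\{0,1\}^n$ let $e(X)=-\frac{X'AX}{w'X}$ and $\nabla e(X)=w\,\frac{X'AX}{(w'X)^2}-AX\,\frac{2}{w'X}$. Fix a nonzero $X_t\in\{0,1\}^n$ and for $\delta\in\mathbb{R}$ define $$T_t(X,\delta)=\nabla e(X_t)'X+\delta\left(\frac{(\mathbf{1}-2X_t)'WX}{w'X_t}+1\right).$$ Then for every $\delta\ge-\lambda_0(W^{-1/2}AW^{-1/2})$ (where $\lambda_0$ is the smallest eigenvalue), $T_t(X,\delta)\ge e(X)$ for all nonzero $X\in\{0,1\}^n$ and $T_t(X_t,\delta)=e(X_t)$; i.e. $T_t(\cdot,\delta)$ is an auxiliary function for $e$ at $X_t$. In particular, $T_t$ is a pseudo-bound of $e$ at $X_t$.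
   Context: A family $B(X,\delta)$ is a pseudo-bound for $e$ at $X_t$ if for at least one parameter value $\delta'$ the function $B(\cdot,\delta')$ satisfies $B(X,\delta')\ge e(X)$ for all admissible $X$ and $B(X_t,\delta')=e(X_t)$. $\mathbf{1}$ is the all-ones vector. *)

theory Defs
  imports "HOL-Analysis.Analysis"
begin

definition diag_mat :: "real ^ 'n \<Rightarrow> real ^ 'n ^ 'n" where
  "diag_mat v = (\<chi> i j. if i = j then v $ i else 0)"

definition smallest_eigenvalue :: "real ^ 'n ^ 'n \<Rightarrow> real" where
  "smallest_eigenvalue M = Min {l. \<exists>v. v \<noteq> 0 \<and> M *v v = l *\<^sub>R v}"

definition binvec :: "real ^ 'n \<Rightarrow> bool" where
  "binvec X \<longleftrightarrow> (\<forall>i. X $ i = 0 \<or> X $ i = 1) \<and> X \<noteq> 0"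

definition energy :: "real ^ 'n ^ 'n \<Rightarrow> real ^ 'n \<Rightarrow> real ^ 'n \<Rightarrow> real" where
  "energy A w X = - (X \<bullet> (A *v X)) / (w \<bullet> X)"

definition grad_energy :: "real ^ 'n ^ 'n \<Rightarrow> real ^ 'n \<Rightarrow> real ^ 'n \<Rightarrow> real ^ 'n" where
  "grad_energy A w X = ((X \<bullet> (A *v X)) / (w \<bullet> X)^2) *\<^sub>R w - (2 / (w \<bullet> X)) *\<^sub>R (A *v X)"

definition T_aux :: "real ^ 'n ^ 'n \<Rightarrow> real ^ 'n \<Rightarrow> real ^ 'n \<Rightarrow> real ^ 'n \<Rightarrow> real \<Rightarrow> real" where
  "T_aux A w Xt X \<delta> = grad_energy A w Xt \<bullet> X
      + \<delta> * (((1 - 2 *\<^sub>R Xt) \<bullet> (diag_mat w *v X)) / (w \<bullet> Xt) + 1)"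

definition pseudo_bound ::
  "(real ^ 'n \<Rightarrow> real \<Rightarrow> real) \<Rightarrow> (real ^ 'n \<Rightarrow> real) \<Rightarrow> (real ^ 'n \<Rightarrow> bool) \<Rightarrow> real ^ 'n \<Rightarrow> bool" where
  "pseudo_bound B e adm Xt \<longleftrightarrow>
     (\<exists>\<delta>'. (\<forall>X. adm X \<longrightarrow> B X \<delta>' \<ge> e X) \<and> B Xt \<delta>' = e Xt)"

end

theory Submission imports Defs begin

lemma aux: assumes "(c::real) \<ge> 0" "a > 0" shows "2*(-a/(c+1))*a + (-a/(c+1))^2*c < 0"
proof -
  define t where "t = -a/(c+1)"
  have h: "c + 1 > 0" using assms by simp
  have t0: "t < 0" using assms h by (simp add: t_def)
  have "t * c = - (a * (c/(c+1)))" by (simp add: t_def)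
  moreover have "c/(c+1) < 1" using h by simp
  moreover have "a * (c/(c+1)) < a * 1" using assms(2) \<open>c/(c+1) < 1\<close> by (intro mult_strict_left_mono)
  ultimately have "t * c > - a" by simp
  then have "2*a + t*c > 0" using assms by simp
  then have "t * (2*a + t*c) < 0" using t0 by (simp add: mult_neg_pos)
  then show ?thesis unfolding t_def[symmetric] by (simp add: algebra_simps power2_eq_square)
qed

lemma sym_inner:
  fixes M :: "real^'n^'n" assumes "transpose M = M"
  shows "(M *v x) \<bullet> y = x \<bullet> (M *v y)"
proof -
  have "x \<bullet> (M *v y) = (x v* M) \<bullet> y" by (simp add: dot_lmul_matrix)
  also have "x v* M = transpose M *v x" by simp
  finally show ?thesis using assms by simp
qed

lemma sym_eig_finite:
  fixes M :: "real^'n^'n" assumes sym: "transpose M = M"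
  shows "finite {l. \<exists>v. v \<noteq> 0 \<and> M *v v = l *\<^sub>R v}" (is "finite ?S")
proof -
  define f where "f l = (SOME v. v \<noteq> 0 \<and> M *v v = l *\<^sub>R v)" for l
  have f: "f l \<noteq> 0 \<and> M *v f l = l *\<^sub>R f l" if "l \<in> ?S" for l
    using that unfolding f_def by (metis (mono_tags, lifting) mem_Collect_eq someI_ex)
  have inj: "inj_on f ?S"
  proof (rule inj_onI)
    fix a b assume a: "a \<in> ?S" and b: "b \<in> ?S" and e: "f a = f b"
    have "a *\<^sub>R f a = b *\<^sub>R f a" using f[OF a] f[OF b] e by metis
    then show "a = b" using f[OF a] by (simp add: scaleR_cancel_right)
  qed
  have orth: "pairwise orthogonal (f ` ?S)"
    unfolding pairwise_def orthogonal_def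
  proof (intro ballI impI)
    fix x y assume "x \<in> f ` ?S" "y \<in> f ` ?S" and ne0: "x \<noteq> y"
    then obtain a b where a: "a \<in> ?S" and b: "b \<in> ?S" and xy: "x = f a" "y = f b" by blast
    have ne: "f a \<noteq> f b" using ne0 xy by simp
    show "x \<bullet> y = 0" unfolding xy
    proof -
    have "a \<noteq> b" using ne by auto
    have "a * (f a \<bullet> f b) = (M *v f a) \<bullet> f b" using f[OF a] by simp
    also have "\<dots> = f a \<bullet> (M *v f b)" by (rule sym_inner[OF sym])
    also have "\<dots> = b * (f a \<bullet> f b)" using f[OF b] by simp
    finally show "f a \<bullet> f b = 0" using \<open>a \<noteq> b\<close> by auto
    qed
  qed
  have "0 \<notin> f ` ?S" using f by (metis (no_types, lifting) imageE)
  then have "independent (f ` ?S)" using pairwise_orthogonal_independent[OF orth] by auto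
  then have "finite (f ` ?S)" by (rule finiteI_independent)
  then show ?thesis using inj finite_imageD by blast
qed

lemma sym_min_eig:
  fixes M :: "real^'n^'n" assumes sym: "transpose M = M"
  shows "\<forall>z. z \<bullet> (M *v z) \<ge> smallest_eigenvalue M * (z \<bullet> z)"
proof -
  let ?Q = "\<lambda>z. z \<bullet> (M *v z)"
  have cont: "continuous_on (sphere 0 1) ?Q"
    by (intro continuous_intros linear_continuous_on linear_linear[THEN iffD1] matrix_vector_mul_linear)
  have ne: "sphere (0::real^'n) 1 \<noteq> {}"
  proof -
    have "axis undefined 1 \<in> sphere (0::real^'n) 1" by simp
    then show ?thesis by blast
  qed
  obtain z0 where z0: "z0 \<in> sphere 0 1" and zmin: "\<And>y. y \<in> sphere 0 1 \<Longrightarrow> ?Q z0 \<le> ?Q y"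
    using continuous_attains_inf[OF compact_sphere ne cont] by blast
  define \<mu> where "\<mu> = ?Q z0"
  have z0n: "z0 \<bullet> z0 = 1" using z0 by (simp add: dot_square_norm)
  have R: "?Q x \<ge> \<mu> * (x \<bullet> x)" for x
  proof (cases "x = 0")
    case True then show ?thesis by simp
  next
    case False
    define u where "u = (1 / norm x) *\<^sub>R x"
    have u: "u \<in> sphere 0 1" using False by (simp add: u_def)
    have x: "x = norm x *\<^sub>R u" using False by (simp add: u_def)
    have "?Q x = (norm x)^2 * ?Q u"
      by (subst (1 2) x) (simp add: matrix_vector_mult_scaleR power2_eq_square)
    moreover have "x \<bullet> x = (norm x)^2" by (simp add: power2_norm_eq_inner)
    ultimately show ?thesis using zmin[OF u] unfolding \<mu>_def
      by (simp add: mult.commute mult_right_mono)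
  qed
  define y where "y = M *v z0 - \<mu> *\<^sub>R z0"
  define c where "c = ?Q y - \<mu> * (y \<bullet> y)"
  have c0: "c \<ge> 0" using R[of y] by (simp add: c_def)
  have exp: "?Q (z0 + t *\<^sub>R y) - \<mu> * ((z0 + t *\<^sub>R y) \<bullet> (z0 + t *\<^sub>R y))
       = 2 * t * (y \<bullet> y) + t^2 * c" for t
  proof -
    have s: "z0 \<bullet> (M *v y) = y \<bullet> (M *v z0)"
      using sym_inner[OF sym, of y z0] by (simp add: inner_commute)
    show ?thesis
      unfolding c_def using s z0n
      by (simp add: y_def matrix_vector_right_distrib matrix_vector_mult_scaleR inner_add_left inner_add_right
          inner_diff_left inner_diff_right inner_commute \<mu>_def algebra_simps power2_eq_square)
  qed
  have yz: "y = 0"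
  proof (rule ccontr)
    assume "y \<noteq> 0"
    then have yy: "y \<bullet> y > 0" by simp
    define t where "t = - (y \<bullet> y) / (c + 1)"
    have neg: "2 * t * (y \<bullet> y) + t^2 * c < 0" unfolding t_def using aux[OF c0 yy] by simp
    show False using neg exp[of t] R[of "z0 + t *\<^sub>R y"] by linarith
  qed
  have eig: "\<mu> \<in> {l. \<exists>v. v \<noteq> 0 \<and> M *v v = l *\<^sub>R v}"
    using yz z0 by (auto simp: y_def intro!: exI[of _ z0])
  have low: "\<mu> \<le> l" if lS: "l \<in> {l. \<exists>v. v \<noteq> 0 \<and> M *v v = l *\<^sub>R v}" for l
  proof -
    obtain v where v: "v \<noteq> 0" "M *v v = l *\<^sub>R v" using lS by auto
    have "l * (v \<bullet> v) \<ge> \<mu> * (v \<bullet> v)" using R[of v] v by (simp add: inner_commute)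
    then show ?thesis using v by simp
  qed
  have "smallest_eigenvalue M = \<mu>"
    unfolding smallest_eigenvalue_def
    using sym_eig_finite[OF sym] eig low by (intro Min_eqI) auto
  then show ?thesis using R by simp
qed


lemma diag_mult: "diag_mat v *v x = (\<chi> i. v$i * x$i)"
proof -
  have "(\<Sum>j\<in>UNIV. (if i = j then v$i else 0) * x$j) = (\<Sum>j\<in>UNIV. if i = j then v$j * x$j else 0)" for i
    by (rule sum.cong) auto
  then show ?thesis by (simp add: diag_mat_def matrix_vector_mult_def vec_eq_iff)
qed

lemma diag_sym: "transpose (diag_mat v) = diag_mat v"
  by (simp add: diag_mat_def transpose_def vec_eq_iff)

lemma binvec_pos:
  assumes "binvec X" "\<forall>i. w $ i > 0"
  shows "w \<bullet> X > 0"
proof -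
  from assms(1) obtain i where i: "X $ i \<noteq> 0" unfolding binvec_def by (metis vec_eq_iff zero_index)
  then have "X $ i = 1" using assms(1) unfolding binvec_def by auto
  have nn: "\<forall>j\<in>UNIV. 0 \<le> w$j * X$j" using assms unfolding binvec_def
    by (metis less_eq_real_def mult_nonneg_nonneg order_refl zero_le_one)
  show ?thesis unfolding inner_vec_def
    by (rule sum_pos2[where i=i]) (use \<open>X $ i = 1\<close> assms(2) nn in auto)
qed

lemma binsq: "binvec X \<Longrightarrow> X $ i * X $ i = X $ i"
  unfolding binvec_def by (cases "X $ i = 0") auto

lemma key_identity:
  fixes A :: "real ^ 'n ^ 'n" and w Xt X :: "real ^ 'n"
  assumes symA: "transpose A = A"
    and wpos: "\<forall>i. w $ i > 0"
    and Xt: "binvec Xt" and X: "binvec X"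
  defines "d \<equiv> (1 / (w \<bullet> X)) *\<^sub>R X - (1 / (w \<bullet> Xt)) *\<^sub>R Xt"
  shows "T_aux A w Xt X \<delta> - energy A w X = (w \<bullet> X) * (d \<bullet> (A *v d) + \<delta> * (d \<bullet> (diag_mat w *v d)))"
proof -
  define s where "s = w \<bullet> X"
  define st where "st = w \<bullet> Xt"
  have s0: "s > 0" using binvec_pos[OF X wpos] by (simp add: s_def)
  have st0: "st > 0" using binvec_pos[OF Xt wpos] by (simp add: st_def)
  have bsym: "Xt \<bullet> (A *v X) = X \<bullet> (A *v Xt)"
    using sym_inner[OF symA, of Xt X] by (simp add: inner_commute)
  have Xw: "X \<bullet> w = s" by (simp add: s_def inner_commute)
  have part1: "grad_energy A w Xt \<bullet> X - energy A w X = s * (d \<bullet> (A *v d))"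
    unfolding grad_energy_def energy_def d_def s_def[symmetric] st_def[symmetric]
    using s0 st0 bsym Xw inner_commute[of "A *v Xt" X]
    by (simp add: inner_diff_left inner_diff_right matrix_vector_mult_diff_distrib
        matrix_vector_mult_scaleR inner_commute[of w X] s_def[symmetric] field_simps power2_eq_square)
  define P where "P = (\<Sum>i\<in>UNIV. w$i * X$i * Xt$i)"
  have SX: "(\<Sum>i\<in>UNIV. w$i * X$i) = s" by (simp add: s_def inner_vec_def)
  have SXt: "(\<Sum>i\<in>UNIV. w$i * Xt$i) = st" by (simp add: st_def inner_vec_def)
  have L: "(1 - 2 *\<^sub>R Xt) \<bullet> (diag_mat w *v X) = s - 2 * P"
  proof -
    have "(1 - 2 *\<^sub>R Xt) \<bullet> (diag_mat w *v X) = (\<Sum>i\<in>UNIV. w$i * X$i - 2 * (w$i * X$i * Xt$i))"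
      by (simp add: inner_vec_def diag_mult algebra_simps)
    also have "\<dots> = s - 2 * P" by (simp add: sum_subtractf sum_distrib_left SX P_def)
    finally show ?thesis .
  qed
  have comp: "s * (d$i * (w$i * d$i)) = w$i * X$i / s + s * (w$i * Xt$i) / st^2 - 2 * (w$i * X$i * Xt$i) / st" for i
  proof -
    have xi: "X$i = 0 \<or> X$i = 1" "Xt$i = 0 \<or> Xt$i = 1" using X Xt unfolding binvec_def by auto
    show ?thesis using xi s0 st0 by (elim disjE) (simp_all add: d_def s_def[symmetric] st_def[symmetric] field_simps power2_eq_square)
  qed
  have R: "s * (d \<bullet> (diag_mat w *v d)) = 1 + s / st - 2 * P / st"
  proof -
    have "s * (d \<bullet> (diag_mat w *v d)) = (\<Sum>i\<in>UNIV. s * (d$i * (w$i * d$i)))"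
      by (simp add: inner_vec_def diag_mult sum_distrib_left)
    also have "\<dots> = (\<Sum>i\<in>UNIV. w$i * X$i / s + s * (w$i * Xt$i) / st^2 - 2 * (w$i * X$i * Xt$i) / st)"
      by (simp add: comp)
    also have "\<dots> = (\<Sum>i\<in>UNIV. w$i * X$i) / s + s * (\<Sum>i\<in>UNIV. w$i * Xt$i) / st^2 - 2 * P / st"
      by (simp add: sum_subtractf sum.distrib sum_divide_distrib sum_distrib_left P_def)
    also have "\<dots> = 1 + s / st - 2 * P / st"
      using s0 st0 by (simp add: SX SXt power2_eq_square)
    finally show ?thesis .
  qed
  have part2: "((1 - 2 *\<^sub>R Xt) \<bullet> (diag_mat w *v X)) / st + 1 = s * (d \<bullet> (diag_mat w *v d))"
    unfolding L R using st0 by (simp add: field_simps)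
  show ?thesis
    using part1 part2 unfolding T_aux_def s_def st_def by (simp add: algebra_simps)
qed


theorem lemma2:
  fixes A :: "real ^ 'n ^ 'n" and w Xt :: "real ^ 'n"
  assumes symA: "transpose A = A"
    and wpos: "\<forall>i. w $ i > 0"
    and Xt: "binvec Xt"
  shows "(\<forall>\<delta>. \<delta> \<ge> - smallest_eigenvalue
              (diag_mat (\<chi> i. 1 / sqrt (w $ i)) ** A ** diag_mat (\<chi> i. 1 / sqrt (w $ i)))
          \<longrightarrow> (\<forall>X. binvec X \<longrightarrow> T_aux A w Xt X \<delta> \<ge> energy A w X)
            \<and> T_aux A w Xt Xt \<delta> = energy A w Xt)
       \<and> pseudo_bound (T_aux A w Xt) (energy A w) binvec Xt"
proof -
  define D where "D = diag_mat (\<chi> i. 1 / sqrt (w $ i))"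
  define M where "M = D ** A ** D"
  define l0 where "l0 = smallest_eigenvalue M"
  have symD: "transpose D = D" unfolding D_def by (rule diag_sym)
  have symM: "transpose M = M"
    unfolding M_def by (simp add: matrix_transpose_mul symD symA matrix_mul_assoc)
  have ray: "z \<bullet> (M *v z) \<ge> l0 * (z \<bullet> z)" for z
    using sym_min_eig[OF symM] unfolding l0_def by blast
  have main: "T_aux A w Xt X \<delta> \<ge> energy A w X" if X: "binvec X" and dl: "\<delta> \<ge> - l0" for X \<delta>
  proof -
    define d where "d = (1 / (w \<bullet> X)) *\<^sub>R X - (1 / (w \<bullet> Xt)) *\<^sub>R Xt"
    define z where "z = (\<chi> i. sqrt (w$i) * d$i)"
    have Dz: "D *v z = d"
      using wpos by (simp add: D_def z_def diag_mult vec_eq_iff less_imp_neq[symmetric])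
    have q1: "d \<bullet> (A *v d) = z \<bullet> (M *v z)"
    proof -
      have "z \<bullet> (M *v z) = z \<bullet> (D *v (A *v (D *v z)))"
        by (simp add: M_def matrix_vector_mul_assoc matrix_mul_assoc)
      also have "\<dots> = (D *v z) \<bullet> (A *v (D *v z))"
        by (rule sym_inner[OF symD, symmetric])
      finally show ?thesis using Dz by simp
    qed
    have q2: "d \<bullet> (diag_mat w *v d) = z \<bullet> z"
    proof -
      have e: "d$i * (w$i * d$i) = (sqrt (w$i) * d$i) * (sqrt (w$i) * d$i)" for i
        using wpos[rule_format, of i] by (simp add: algebra_simps)
      show ?thesis unfolding inner_vec_def diag_mult z_def vec_lambda_beta inner_real_def
        by (rule sum.cong[OF refl e])
    qed
    have "0 \<le> (l0 + \<delta>) * (z \<bullet> z)" using dl by simp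
    also have "\<dots> \<le> z \<bullet> (M *v z) + \<delta> * (z \<bullet> z)" using ray[of z] by (simp add: algebra_simps)
    finally have nn: "0 \<le> d \<bullet> (A *v d) + \<delta> * (d \<bullet> (diag_mat w *v d))" using q1 q2 by simp
    have "T_aux A w Xt X \<delta> - energy A w X = (w \<bullet> X) * (d \<bullet> (A *v d) + \<delta> * (d \<bullet> (diag_mat w *v d)))"
      unfolding d_def by (rule key_identity[OF symA wpos Xt X])
    moreover have "w \<bullet> X > 0" by (rule binvec_pos[OF X wpos])
    ultimately have "T_aux A w Xt X \<delta> - energy A w X \<ge> 0" using nn by simp
    then show ?thesis by simp
  qed
  have tight: "T_aux A w Xt Xt \<delta> = energy A w Xt" for \<delta>
    using key_identity[OF symA wpos Xt Xt, of \<delta>] by simp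
  show ?thesis
    unfolding pseudo_bound_def D_def[symmetric] M_def[symmetric] l0_def[symmetric]
    using main tight by auto
qed

end
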